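(* Let $n$ be a positive integer, and let $a\in\mathcal{T}_n$ with $\operatorname{rank}(a)=r$. Then (i) $a\mathcal{T}_na\cong\mathcal{T}_r^c$ for some $c\in\mathcal{T}_r$ with $\operatorname{rank}(c)=\operatorname{rank}(a^2)$; (ii) $\mathcal{T}_n^a\cong b\mathcal{T}_{2n-r}b$ for some $b\in\mathcal{T}_{2n-r}$ with $\operatorname{rank}(b)=n$.
   Context: For a positive integer $m$, $\mathcal{T}_m$ denotes the full transformation semigroup on $\{1,\ldots,m\}$: the set of all functions $\{1,\ldots,m\}\to\{1,\ldots,m\}$ under composition (functions are written to the right of their arguments and composed left-to-right). The rank of $f\in\mathcal{T}_m$ is $\operatorname{rank}(f)=|\operatorname{im}(f)|$. For a semigroup $S$ and $a\in S$, the local subsemigroup $aSa=\{axa: x\in S\}$ is a subsemigroup of $S$ (with the operation of $S$), and the variant $S^a$ is the semigroup with underlying set $S$ and operation $x\star_a y=xay$. Isomorphism $\cong$ means semigroup isomorphism. *)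

theory Defs
  imports Main
begin

text \<open>Transformations of the m-element set, represented as the set {0..<m}
  (a relabelling of {1..m}). To make the representation canonical, a transformation
  is a function on nat that maps {0..<m} into itself and fixes every point >= m.\<close>

definition FullT :: "nat \<Rightarrow> (nat \<Rightarrow> nat) set" where
  "FullT m = {f. (\<forall>x<m. f x < m) \<and> (\<forall>x\<ge>m. f x = x)}"

text \<open>Product in T_m: functions are written to the right of their arguments and composed
  left to right, so x(fg) = (xf)g, i.e. tmul f g = g o f.\<close>

definition tmul :: "(nat \<Rightarrow> nat) \<Rightarrow> (nat \<Rightarrow> nat) \<Rightarrow> (nat \<Rightarrow> nat)" where
  "tmul f g = g \<circ> f"

definition trank :: "nat \<Rightarrow> (nat \<Rightarrow> nat) \<Rightarrow> nat" where
  "trank m f = card (f ` {0..<m})"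

definition local_sub :: "nat \<Rightarrow> (nat \<Rightarrow> nat) \<Rightarrow> (nat \<Rightarrow> nat) set" where
  "local_sub m a = {tmul (tmul a x) a | x. x \<in> FullT m}"

definition variant_mul :: "(nat \<Rightarrow> nat) \<Rightarrow> (nat \<Rightarrow> nat) \<Rightarrow> (nat \<Rightarrow> nat) \<Rightarrow> (nat \<Rightarrow> nat)" where
  "variant_mul a x y = tmul (tmul x a) y"

definition sg_iso :: "'a set \<Rightarrow> ('a \<Rightarrow> 'a \<Rightarrow> 'a) \<Rightarrow> 'b set \<Rightarrow> ('b \<Rightarrow> 'b \<Rightarrow> 'b) \<Rightarrow> bool" where
  "sg_iso A opA B opB \<longleftrightarrow>
     (\<exists>\<phi>. bij_betw \<phi> A B \<and> (\<forall>x\<in>A. \<forall>y\<in>A. \<phi> (opA x y) = opB (\<phi> x) (\<phi> y)))"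

end

theory Submission
  imports Defs
begin

lemma FullT_tmul: "f \<in> FullT m \<Longrightarrow> g \<in> FullT m \<Longrightarrow> tmul f g \<in> FullT m"
  by (auto simp: FullT_def tmul_def)

lemma sg_iso_inv:
  assumes bij: "bij_betw \<psi> B A"
    and hom: "\<And>x y. x\<in>B \<Longrightarrow> y\<in>B \<Longrightarrow> \<psi> (opB x y) = opA (\<psi> x) (\<psi> y)"
    and cl: "\<And>x y. x\<in>B \<Longrightarrow> y\<in>B \<Longrightarrow> opB x y \<in> B"
  shows "sg_iso A opA B opB"
proof -
  let ?\<phi> = "inv_into B \<psi>"
  have "bij_betw ?\<phi> A B" using bij_betw_inv_into bij by blast
  moreover have "?\<phi> (opA x y) = opB (?\<phi> x) (?\<phi> y)" if "x\<in>A" "y\<in>A" for x y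
  proof -
    have x: "?\<phi> x \<in> B" "\<psi> (?\<phi> x) = x" using that bij
      by (auto simp: bij_betw_def inv_into_into f_inv_into_f)
    have y: "?\<phi> y \<in> B" "\<psi> (?\<phi> y) = y" using that bij
      by (auto simp: bij_betw_def inv_into_into f_inv_into_f)
    have "opA x y = \<psi> (opB (?\<phi> x) (?\<phi> y))" using hom x y by simp
    then show ?thesis using inv_into_f_f bij_betw_imp_inj_on bij cl x y by metis
  qed
  ultimately show ?thesis unfolding sg_iso_def by blast
qed

lemma part2:
  fixes n r :: nat and a :: "nat \<Rightarrow> nat"
  assumes aF: "a \<in> FullT n" and rk: "trank n a = r"
  shows "\<exists>b\<in>FullT (2 * n - r). trank (2 * n - r) b = n \<and>
            sg_iso (FullT n) (variant_mul a) (local_sub (2 * n - r) b) tmul"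
proof -
  define m where "m = 2 * n - r"
  define A where "A = a ` {0..<n}"
  have Asub: "A \<subseteq> {0..<n}" using aF by (auto simp: A_def FullT_def)
  have cA: "card A = r" using rk by (simp add: trank_def A_def)
  have rn: "r \<le> n" using cA card_mono[OF _ Asub] by simp
  have nm: "n \<le> m" using rn by (simp add: m_def)
  have "card ({0..<n} - A) = card {n..<m}"
    using Asub cA rn by (simp add: card_Diff_subset m_def finite_subset)
  then obtain h where h: "bij_betw h {n..<m} ({0..<n} - A)"
    using finite_same_card_bij[of "{n..<m}" "{0..<n} - A"] by auto
  define b where "b = (\<lambda>i. if i < n then a i else if i < m then h i else i)"
  have hin: "n \<le> i \<Longrightarrow> i < m \<Longrightarrow> h i \<in> {0..<n} - A" for i
    using h by (auto simp: bij_betw_def)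
  have bimg: "b ` {0..<m} = {0..<n}"
  proof
    show "b ` {0..<m} \<subseteq> {0..<n}" using aF hin by (auto simp: FullT_def b_def)
    show "{0..<n} \<subseteq> b ` {0..<m}"
    proof
      fix j assume j: "j \<in> {0..<n}"
      show "j \<in> b ` {0..<m}"
      proof (cases "j \<in> A")
        case True
        then obtain i where "i < n" "j = a i" by (auto simp: A_def)
        then show ?thesis using nm by (auto simp: b_def intro!: image_eqI[of _ _ i])
      next
        case False
        then have "j \<in> h ` {n..<m}" using h j by (auto simp: bij_betw_def)
        then obtain i where "n \<le> i" "i < m" "j = h i" by auto
        then show ?thesis by (auto simp: b_def intro!: image_eqI[of _ _ i])
      qed
    qed
  qed
  have bn: "i < m \<Longrightarrow> b i < n" for i using bimg by auto
  have bge: "m \<le> i \<Longrightarrow> b i = i" for i using nm by (simp add: b_def)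
  have bF: "b \<in> FullT m" using bn bge nm unfolding FullT_def by (auto intro: less_le_trans)
  have bxa: "x \<in> FullT n \<Longrightarrow> b (x (b i)) = a (x (b i))" for x i
  proof -
    assume x: "x \<in> FullT n"
    show ?thesis
    proof (cases "i < m")
      case True then have "x (b i) < n" using bn x by (auto simp: FullT_def)
      then show ?thesis by (simp add: b_def)
    next
      case False then have "x (b i) = i" "n \<le> i" using bge x nm by (auto simp: FullT_def)
      then show ?thesis using aF False by (auto simp: b_def FullT_def)
    qed
  qed
  define \<phi> where "\<phi> = (\<lambda>x::nat\<Rightarrow>nat. x \<circ> b)"
  have inl: "\<phi> x \<in> local_sub m b" if x: "x \<in> FullT n" for x
  proof -
    define y where "y = (\<lambda>j. if j < n then (SOME i. i < m \<and> b i = x j) else j)"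
    have ex: "j < n \<Longrightarrow> \<exists>i. i < m \<and> b i = x j" for j
    proof -
      assume "j < n"
      then have "x j \<in> b ` {0..<m}" using x bimg by (auto simp: FullT_def)
      then show ?thesis by force
    qed
    have "y j < m" if "j < m" for j
    proof (cases "j < n")
      case True then show ?thesis using someI_ex[OF ex[OF True]] by (simp add: y_def)
    next
      case False then show ?thesis using that by (simp add: y_def)
    qed
    moreover have "y j = j" if "m \<le> j" for j using that nm by (simp add: y_def)
    ultimately have yF: "y \<in> FullT m" by (simp add: FullT_def)
    have "\<phi> x = tmul (tmul b y) b"
    proof
      fix i show "\<phi> x i = tmul (tmul b y) b i"
      proof (cases "i < m")
        case True then have "b i < n" using bn by auto
        then show ?thesis using someI_ex[OF ex[of "b i"]] by (simp add: \<phi>_def tmul_def y_def)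
      next
        case False then show ?thesis using x nm bge by (auto simp: \<phi>_def tmul_def y_def FullT_def)
      qed
    qed
    then show ?thesis using yF by (auto simp: local_sub_def)
  qed
  have inj: "inj_on \<phi> (FullT n)"
  proof
    fix x x' assume x: "x \<in> FullT n" and x': "x' \<in> FullT n" and e: "\<phi> x = \<phi> x'"
    show "x = x'"
    proof
      fix j show "x j = x' j"
      proof (cases "j < n")
        case True then obtain i where "i < m" "j = b i" using bimg by (metis atLeastLessThan_iff imageE zero_le)
        then show ?thesis using e by (metis \<phi>_def comp_apply)
      next
        case False then show ?thesis using x x' by (auto simp: FullT_def)
      qed
    qed
  qed
  have surj: "local_sub m b \<subseteq> \<phi> ` FullT n"
  proof
    fix s assume "s \<in> local_sub m b"
    then obtain y where yF: "y \<in> FullT m" and s: "s = tmul (tmul b y) b" by (auto simp: local_sub_def)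
    define x where "x = (\<lambda>j. if j < n then b (y j) else j)"
    have xF: "x \<in> FullT n" using yF nm bn by (auto simp: FullT_def x_def)
    have "s = \<phi> x"
    proof
      fix i show "s i = \<phi> x i"
      proof (cases "i < m")
        case True then show ?thesis using bn by (simp add: s \<phi>_def x_def tmul_def)
      next
        case False then show ?thesis using yF nm bge by (auto simp: s \<phi>_def x_def tmul_def FullT_def)
      qed
    qed
    then show "s \<in> \<phi> ` FullT n" using xF by auto
  qed
  have bij: "bij_betw \<phi> (FullT n) (local_sub m b)"
    using inj surj inl by (auto simp: bij_betw_def)
  have hom: "\<phi> (variant_mul a x y) = tmul (\<phi> x) (\<phi> y)" if "x \<in> FullT n" "y \<in> FullT n" for x y
    using bxa[OF that(1)] by (auto simp: \<phi>_def variant_mul_def tmul_def)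
  have "trank m b = n" using bimg by (simp add: trank_def)
  then show ?thesis using bF bij hom unfolding m_def[symmetric] sg_iso_def by blast
qed


lemma part1:
  fixes n r :: nat and a :: "nat \<Rightarrow> nat"
  assumes aF: "a \<in> FullT n" and rk: "trank n a = r"
  shows "\<exists>c\<in>FullT r. trank r c = trank n (tmul a a) \<and>
            sg_iso (local_sub n a) tmul (FullT r) (variant_mul c)"
proof -
  define A where "A = a ` {0..<n}"
  have Asub: "A \<subseteq> {0..<n}" using aF by (auto simp: A_def FullT_def)
  have cA: "card A = r" using rk by (simp add: trank_def A_def)
  have fA: "finite A" using Asub finite_subset by blast
  obtain e where e: "bij_betw e {0..<r} A" using ex_bij_betw_nat_finite[OF fA] cA by auto
  define e' where "e' = inv_into {0..<r} e"
  have eA: "k < r \<Longrightarrow> e k \<in> A" for k using e by (auto simp: bij_betw_def)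
  have e'e: "k < r \<Longrightarrow> e' (e k) = k" for k using e unfolding e'_def
    by (simp add: bij_betw_def inv_into_f_f)
  have e'A: "y \<in> A \<Longrightarrow> e' y < r" for y using e unfolding e'_def
    by (metis atLeastLessThan_iff bij_betw_def inv_into_into)
  have ee': "y \<in> A \<Longrightarrow> e (e' y) = y" for y using e unfolding e'_def
    by (simp add: bij_betw_def f_inv_into_f)
  have aA: "i < n \<Longrightarrow> a i \<in> A" for i by (simp add: A_def)
  have en: "k < r \<Longrightarrow> e k < n" for k using eA Asub by (meson atLeastLessThan_iff subsetD)
  define c where "c = (\<lambda>k. if k < r then e' (a (e k)) else k)"
  have cF: "c \<in> FullT r" using e'A aA en by (auto simp: c_def FullT_def)
  have cimg: "c ` {0..<r} = e' ` (a ` A)"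
  proof
    show "c ` {0..<r} \<subseteq> e' ` a ` A" using eA by (auto simp: c_def)
    show "e' ` a ` A \<subseteq> c ` {0..<r}"
    proof
      fix z assume "z \<in> e' ` a ` A"
      then obtain y where y: "y \<in> A" "z = e' (a y)" by auto
      then have "e' y < r" "e (e' y) = y" using e'A ee' by auto
      then show "z \<in> c ` {0..<r}" using y by (auto simp: c_def intro!: image_eqI[of _ _ "e' y"])
    qed
  qed
  have inje': "inj_on e' A" using ee' by (metis inj_onI)
  have aAA: "a ` A \<subseteq> A" using Asub aA by auto
  have "card (c ` {0..<r}) = card (a ` A)"
    unfolding cimg using card_image inj_on_subset[OF inje' aAA] by blast
  moreover have "trank n (tmul a a) = card (a ` A)"
    by (simp add: trank_def tmul_def A_def image_comp)
  ultimately have crk: "trank r c = trank n (tmul a a)" by (simp add: trank_def)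
  define \<psi> where "\<psi> = (\<lambda>t::nat\<Rightarrow>nat. \<lambda>i. if i < n then e (t (e' (a i))) else i)"
  have inl: "\<psi> t \<in> local_sub n a" if t: "t \<in> FullT r" for t
  proof -
    define x where "x = (\<lambda>y. if y < n then (if y \<in> A then (SOME j. j < n \<and> a j = e (t (e' y))) else y) else y)"
    have ex: "y \<in> A \<Longrightarrow> \<exists>j. j < n \<and> a j = e (t (e' y))" for y
    proof -
      assume "y \<in> A"
      then have "e (t (e' y)) \<in> A" using e'A t eA by (auto simp: FullT_def)
      then show ?thesis by (auto simp: A_def)
    qed
    have "x y < n" if "y < n" for y
    proof (cases "y \<in> A")
      case True then show ?thesis using someI_ex[OF ex[OF True]] that by (simp add: x_def)
    next
      case False then show ?thesis using that by (simp add: x_def)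
    qed
    moreover have "x y = y" if "n \<le> y" for y using that by (simp add: x_def)
    ultimately have xF: "x \<in> FullT n" by (simp add: FullT_def)
    have "\<psi> t = tmul (tmul a x) a"
    proof
      fix i show "\<psi> t i = tmul (tmul a x) a i"
      proof (cases "i < n")
        case True
        then have "a i \<in> A" "a i < n" using aA aF by (auto simp: FullT_def)
        then show ?thesis using someI_ex[OF ex[of "a i"]] True by (simp add: \<psi>_def tmul_def x_def)
      next
        case False then show ?thesis using aF by (auto simp: \<psi>_def tmul_def x_def FullT_def)
      qed
    qed
    then show ?thesis using xF by (auto simp: local_sub_def)
  qed
  have inj: "inj_on \<psi> (FullT r)"
  proof
    fix t t' assume t: "t \<in> FullT r" and t': "t' \<in> FullT r" and eq: "\<psi> t = \<psi> t'"
    show "t = t'"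
    proof
      fix k show "t k = t' k"
      proof (cases "k < r")
        case True
        then have "e k \<in> A" using eA by auto
        then obtain i where i: "i < n" "a i = e k" by (auto simp: A_def)
        have "\<psi> t i = \<psi> t' i" using eq by simp
        then have "e (t k) = e (t' k)" using i True e'e by (simp add: \<psi>_def)
        moreover have "t k < r" "t' k < r" using t t' True by (auto simp: FullT_def)
        ultimately show ?thesis using e by (metis atLeastLessThan_iff bij_betw_def inj_onD zero_le)
      next
        case False then show ?thesis using t t' by (auto simp: FullT_def)
      qed
    qed
  qed
  have surj: "local_sub n a \<subseteq> \<psi> ` FullT r"
  proof
    fix s assume "s \<in> local_sub n a"
    then obtain x where xF: "x \<in> FullT n" and s: "s = tmul (tmul a x) a" by (auto simp: local_sub_def)
    define t where "t = (\<lambda>k. if k < r then e' (a (x (e k))) else k)"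
    have "t k < r" if "k < r" for k
    proof -
      have "x (e k) < n" using xF en that by (auto simp: FullT_def)
      then show ?thesis using that aA e'A by (simp add: t_def)
    qed
    then have tF: "t \<in> FullT r" by (simp add: FullT_def t_def)
    have "s = \<psi> t"
    proof
      fix i show "s i = \<psi> t i"
      proof (cases "i < n")
        case True
        then have ai: "a i \<in> A" "e' (a i) < r" using aA e'A by auto
        then have "x (a i) < n" using xF Asub by (auto simp: FullT_def)
        then show ?thesis using ai True ee' aA by (simp add: s \<psi>_def t_def tmul_def)
      next
        case False then show ?thesis using xF aF by (auto simp: s \<psi>_def tmul_def FullT_def)
      qed
    qed
    then show "s \<in> \<psi> ` FullT r" using tF by auto
  qed
  have bij: "bij_betw \<psi> (FullT r) (local_sub n a)"
    using inj surj inl by (auto simp: bij_betw_def)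
  have hom: "\<psi> (variant_mul c t1 t2) = tmul (\<psi> t1) (\<psi> t2)" if "t1 \<in> FullT r" "t2 \<in> FullT r" for t1 t2
  proof
    fix i show "\<psi> (variant_mul c t1 t2) i = tmul (\<psi> t1) (\<psi> t2) i"
    proof (cases "i < n")
      case True
      then have r1: "e' (a i) < r" using aA e'A by auto
      then have r2: "t1 (e' (a i)) < r" using that by (auto simp: FullT_def)
      have "e (t1 (e' (a i))) < n" using en r2 by auto
      then show ?thesis using True r2 e'e by (simp add: \<psi>_def variant_mul_def tmul_def c_def)
    next
      case False then show ?thesis by (simp add: \<psi>_def variant_mul_def tmul_def)
    qed
  qed
  have cl: "variant_mul c t1 t2 \<in> FullT r" if "t1 \<in> FullT r" "t2 \<in> FullT r" for t1 t2
    using that cF FullT_tmul by (simp add: variant_mul_def)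
  have "sg_iso (local_sub n a) tmul (FullT r) (variant_mul c)"
    by (rule sg_iso_inv[where opB="variant_mul c" and opA=tmul, OF bij hom cl])
  then show ?thesis using cF crk by blast
qed

theorem theorem1p4:
  fixes n r :: nat and a :: "nat \<Rightarrow> nat"
  assumes "0 < n" and "a \<in> FullT n" and "trank n a = r"
  shows "(\<exists>c\<in>FullT r. trank r c = trank n (tmul a a) \<and>
            sg_iso (local_sub n a) tmul (FullT r) (variant_mul c))
       \<and> (\<exists>b\<in>FullT (2 * n - r). trank (2 * n - r) b = n \<and>
            sg_iso (FullT n) (variant_mul a) (local_sub (2 * n - r) b) tmul)"
  using part1[OF assms(2,3)] part2[OF assms(2,3)] by blast

end
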